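(* For every strict partition $\lambda$, $q_1(\lambda)=|\lambda|$.
   Context: A strict partition is a finite strictly decreasing sequence of positive integers $\lambda=(\lambda_1>\cdots>\lambda_\ell)$ (the empty sequence is allowed); $|\lambda|=\sum_i\lambda_i$, $\ell(\lambda)=\ell$. The (shifted Young) diagram of $\lambda$ is the set of boxes $(i,j)$ with $1\le i\le\ell(\lambda)$, $i+1\le j\le i+\lambda_i$ (row $i$, column $j$). An outer corner of $\lambda$ is a box of the diagram whose removal leaves the diagram of a strict partition. Let $(\alpha_1,\beta_1),\dots,(\alpha_m,\beta_m)$ be the outer corners with $\alpha_1>\cdots>\alpha_m$, $y_j=\beta_j-\alpha_j$; set $\alpha_{m+1}=0$, $\beta_0=\ell(\lambda)+1$, and $x_i=\beta_i-\alpha_{i+1}$ for $0\le i\le m$. Define $q_1(\lambda)=\sum_{i=0}^m\binom{x_i}{2}-\sum_{i=1}^m\binom{y_i}{2}$. *)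

theory Defs
  imports Main "HOL-Library.Product_Lexorder"
begin

text \<open>A strict partition is a list of positive integers, strictly decreasing.
  lambda_i (1-based) is the list entry at position i-1.\<close>
definition strict_partition :: "nat list \<Rightarrow> bool" where
  "strict_partition la \<longleftrightarrow> sorted_wrt (>) la \<and> (\<forall>x\<in>set la. 0 < x)"

definition size_part :: "nat list \<Rightarrow> nat" where
  "size_part la = sum_list la"

definition shifted_diagram :: "nat list \<Rightarrow> (nat \<times> nat) set" where
  "shifted_diagram la =
     {(i, j). 1 \<le> i \<and> i \<le> length la \<and> i + 1 \<le> j \<and> j \<le> i + la ! (i - 1)}"

definition outer_corners :: "nat list \<Rightarrow> (nat \<times> nat) set" where
  "outer_corners la = {b \<in> shifted_diagram la.
     \<exists>mu. strict_partition mu \<and> shifted_diagram mu = shifted_diagram la - {b}}"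

definition corner_list :: "nat list \<Rightarrow> (nat \<times> nat) list" where
  "corner_list la = rev (sorted_list_of_set (outer_corners la))"

definition alpha :: "nat list \<Rightarrow> nat \<Rightarrow> nat" where
  "alpha la j = (if 1 \<le> j \<and> j \<le> length (corner_list la)
                 then fst (corner_list la ! (j - 1)) else 0)"

definition beta :: "nat list \<Rightarrow> nat \<Rightarrow> nat" where
  "beta la j = (if j = 0 then length la + 1 else snd (corner_list la ! (j - 1)))"

definition xc :: "nat list \<Rightarrow> nat \<Rightarrow> int" where
  "xc la i = int (beta la i) - int (alpha la (i + 1))"

definition yc :: "nat list \<Rightarrow> nat \<Rightarrow> int" where
  "yc la j = int (beta la j) - int (alpha la j)"

definition binom2 :: "int \<Rightarrow> int" where
  "binom2 x = x * (x - 1) div 2"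

definition q1 :: "nat list \<Rightarrow> int" where
  "q1 la = (let m = length (corner_list la) in
     (\<Sum>i\<in>{0..m}. binom2 (xc la i)) - (\<Sum>j\<in>{1..m}. binom2 (yc la j)))"

end

theory Submission
  imports Defs
begin

definition cornerrows :: "nat list \<Rightarrow> nat set" where
  "cornerrows la = {i. 1 \<le> i \<and> i \<le> length la \<and> (i = length la \<or> la!i + 1 < la!(i-1))}"

lemma sp_less:
  assumes "strict_partition la" "p < q" "q < length la"
  shows "la!q < la!p"
  using assms unfolding strict_partition_def sorted_wrt_iff_nth_less by blast

lemma sp_pos:
  assumes "strict_partition la" "p < length la"
  shows "0 < la!p"
  using assms unfolding strict_partition_def by auto

lemma corners_char:
  assumes sp: "strict_partition la"
  shows "outer_corners la = (\<lambda>i. (i, i + la!(i-1))) ` cornerrows la"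
proof (rule set_eqI, rule iffI)
  fix b assume "b \<in> outer_corners la"
  then obtain mu where bD: "b \<in> shifted_diagram la" and mu: "strict_partition mu"
    and Dmu: "shifted_diagram mu = shifted_diagram la - {b}"
    unfolding outer_corners_def by blast
  obtain i j where b: "b = (i,j)" by fastforce
  have ij: "1 \<le> i" "i \<le> length la" "i + 1 \<le> j" "j \<le> i + la!(i-1)"
    using bD b unfolding shifted_diagram_def by auto
  have jeq: "j = i + la!(i-1)"
  proof (rule ccontr)
    assume "j \<noteq> i + la!(i-1)"
    then have "(i, j+1) \<in> shifted_diagram la - {b}"
      using ij b unfolding shifted_diagram_def by auto
    then have "(i, j+1) \<in> shifted_diagram mu" using Dmu by simp
    then have "(i, j) \<in> shifted_diagram mu" using ij unfolding shifted_diagram_def by auto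
    then show False using Dmu b by auto
  qed
  have "i \<in> cornerrows la"
  proof (rule ccontr)
    assume nc: "i \<notin> cornerrows la"
    then have il: "i < length la" and le: "\<not> la!i + 1 < la!(i-1)"
      using ij unfolding cornerrows_def by auto
    have "la!i < la!(i-1)" using sp_less[OF sp, of "i-1" i] il ij by simp
    with le have eq: "la!i + 1 = la!(i-1)" by simp
    have "(i+1, i+1+la!i) \<in> shifted_diagram la - {b}"
      using ij il b sp_pos[OF sp, of i] unfolding shifted_diagram_def by auto
    then have "(i+1, i+1+la!i) \<in> shifted_diagram mu" using Dmu by simp
    then have m1: "i+1 \<le> length mu" "la!i \<le> mu!i"
      unfolding shifted_diagram_def by auto
    have "mu!i < mu!(i-1)" using sp_less[OF mu, of "i-1" i] m1 ij by simp
    then have "la!(i-1) \<le> mu!(i-1)" using m1 eq by simp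
    moreover have "0 < la!(i-1)" using sp_pos[OF sp, of "i-1"] ij by simp
    ultimately have "(i, i + la!(i-1)) \<in> shifted_diagram mu"
      using ij m1 unfolding shifted_diagram_def by auto
    then show False using Dmu b jeq by auto
  qed
  then show "b \<in> (\<lambda>i. (i, i + la!(i-1))) ` cornerrows la" using b jeq by auto
next
  fix b assume "b \<in> (\<lambda>i. (i, i + la!(i-1))) ` cornerrows la"
  then obtain i where iR: "i \<in> cornerrows la" and b: "b = (i, i + la!(i-1))" by auto
  have i: "1 \<le> i" "i \<le> length la" "i = length la \<or> la!i + 1 < la!(i-1)"
    using iR unfolding cornerrows_def by auto
  have pos: "0 < la!(i-1)" using sp_pos[OF sp, of "i-1"] i by simp
  have bD: "b \<in> shifted_diagram la" using i pos b unfolding shifted_diagram_def by auto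
  have "\<exists>mu. strict_partition mu \<and> shifted_diagram mu = shifted_diagram la - {b}"
  proof (cases "2 \<le> la!(i-1)")
    case True
    define mu where "mu = la[i-1 := la!(i-1) - 1]"
    have lmu: "length mu = length la" unfolding mu_def by simp
    have "strict_partition mu"
      unfolding strict_partition_def sorted_wrt_iff_nth_less
    proof (intro conjI allI impI ballI)
      fix p q assume pq: "p < q" "q < length mu"
      show "mu!p > mu!q"
      proof (cases "p = i - 1")
        case True
        then have "i < length la" using pq i lmu by auto
        then have "la!i + 1 < la!(i-1)" using i by auto
        moreover have "la!q \<le> la!i"
          using sp_less[OF sp, of i q] pq lmu True i by (cases "q = i") force+
        ultimately show ?thesis using pq True lmu unfolding mu_def by auto
      next
        case False
        then show ?thesis using sp_less[OF sp, of p q] pq lmu unfolding mu_def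
          by (cases "q = i - 1") (auto simp: nth_list_update)
      qed
    next
      fix x assume "x \<in> set mu"
      then show "0 < x" using True sp set_update_subset_insert[of la "i-1" "la!(i-1) - 1"]
        unfolding mu_def strict_partition_def by auto
    qed
    moreover have "shifted_diagram mu = shifted_diagram la - {b}"
      using True i unfolding shifted_diagram_def mu_def b
      by (auto simp: nth_list_update split: if_splits)
    ultimately show ?thesis by blast
  next
    case False
    then have one: "la!(i-1) = 1" using pos by simp
    then have il: "i = length la" using i by auto
    define mu where "mu = butlast la"
    have "strict_partition mu"
      using sp unfolding strict_partition_def mu_def butlast_conv_take
      by (auto dest: in_set_takeD)
    moreover have "shifted_diagram mu = shifted_diagram la - {b}"
    proof (rule set_eqI)
      fix x :: "nat \<times> nat"
      obtain r c where x: "x = (r,c)" by fastforce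
      show "x \<in> shifted_diagram mu \<longleftrightarrow> x \<in> shifted_diagram la - {b}"
        using one il i unfolding shifted_diagram_def mu_def b x
        by (cases "r = length la") (auto simp: nth_butlast)
    qed
    ultimately show ?thesis by blast
  qed
  then show "b \<in> outer_corners la" using bD unfolding outer_corners_def by blast
qed

lemma binom2_Suc: "binom2 (y + 1) = binom2 y + y"
proof -
  have "(y + 1) * (y + 1 - 1) = y * (y - 1) + y * 2" by (simp add: algebra_simps)
  then show ?thesis unfolding binom2_def by simp
qed

lemma sum_block:
  fixes F :: "nat \<Rightarrow> int"
  assumes "p \<le> q" "\<forall>i. p < i \<and> i \<le> q \<longrightarrow> F i = B - int i"
  shows "(\<Sum>i\<in>{1..q}. F i) - (\<Sum>i\<in>{1..p}. F i) = binom2 (B - int p) - binom2 (B - int q)"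
  using assms
proof (induction q)
  case 0
  then show ?case by simp
next
  case (Suc q)
  show ?case
  proof (cases "p = Suc q")
    case True then show ?thesis by simp
  next
    case False
    then have pq: "p \<le> q" using Suc by simp
    have IH: "(\<Sum>i\<in>{1..q}. F i) - (\<Sum>i\<in>{1..p}. F i) = binom2 (B - int p) - binom2 (B - int q)"
      using Suc pq by auto
    have F: "F (Suc q) = B - int q - 1" using Suc pq by auto
    have b: "binom2 (B - int q) = binom2 (B - int (Suc q)) + (B - int q - 1)"
      using binom2_Suc[of "B - int q - 1"] by (simp add: algebra_simps)
    show ?thesis using IH F b by (simp add: sum.atLeast_Suc_atMost_Suc_shift del: sum.op_ivl_Suc)
  qed
qed

lemma block:
  assumes sp: "strict_partition la"
    and srt: "sorted_wrt (>) rs" and set_rs: "set rs = cornerrows la"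
    and j: "1 \<le> j" "j \<le> length rs"
    and p: "p = (if j < length rs then rs!j else 0)" and q: "q = rs!(j-1)"
  shows "p < q \<and> (\<forall>i. p < i \<and> i \<le> q \<longrightarrow> i + la!(i-1) = q + la!(q-1))"
proof -
  have qR: "q \<in> cornerrows la" using q j set_rs nth_mem[of "j-1" rs] by auto
  then have q1: "1 \<le> q" "q \<le> length la" unfolding cornerrows_def by auto
  have pq: "p < q"
  proof (cases "j < length rs")
    case True then show ?thesis using p q srt j unfolding sorted_wrt_iff_nth_less by auto
  next
    case False then show ?thesis using p q1 by simp
  qed
  have nonR: "i \<notin> cornerrows la" if "p < i" "i < q" for i
  proof
    assume "i \<in> cornerrows la"
    then obtain k where k: "k < length rs" "rs!k = i" using set_rs by (metis in_set_conv_nth)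
    show False
    proof (cases "k < j - 1")
      case True then have "rs!k > rs!(j-1)" using srt j unfolding sorted_wrt_iff_nth_less by auto
      then show False using k q that by auto
    next
      case False
      show False
      proof (cases "k = j - 1")
        case True then show False using k q that by auto
      next
        case False': False
        then have kj: "j \<le> k" "j < length rs" using False k j by auto
        then have "rs!k \<le> rs!j" using srt k(1) unfolding sorted_wrt_iff_nth_less
          by (cases "k = j") (auto intro: less_imp_le)
        then show False using k p kj that by auto
      qed
    qed
  qed
  have down: "\<forall>d. d < q - p \<longrightarrow> (q-d) + la!(q-d-1) = q + la!(q-1)"
  proof (intro allI)
    fix d show "d < q - p \<longrightarrow> (q-d) + la!(q-d-1) = q + la!(q-1)"
    proof (induction d)
      case 0 then show ?case by simp
    next
      case (Suc d)
      show ?case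
      proof
        assume d: "Suc d < q - p"
        define i where "i = q - Suc d"
        have i: "p < i" "i < q" "1 \<le> i" "q - d = i + 1" using d i_def by auto
        have "i \<notin> cornerrows la" using nonR i by auto
        then have nc: "\<not> la!i + 1 < la!(i-1)" using i q1 unfolding cornerrows_def by auto
        have "la!i < la!(i-1)" using sp_less[OF sp, of "i-1" i] i q1 by simp
        with nc have eq: "la!(i-1) = la!i + 1" by simp
        have "(q-d) + la!(q-d-1) = q + la!(q-1)" using Suc d by simp
        then show "(q - Suc d) + la!(q - Suc d - 1) = q + la!(q-1)"
          using eq i i_def by simp
      qed
    qed
  qed
  show ?thesis
  proof (intro conjI allI impI)
    fix i assume "p < i \<and> i \<le> q"
    then show "i + la!(i-1) = q + la!(q-1)" using down[rule_format, of "q - i"] by auto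
  qed (rule pq)
qed


theorem lemma4p2:
  fixes la :: "nat list"
  assumes "strict_partition la"
  shows "q1 la = int (size_part la)"
proof -
  note sp = assms
  define R where "R = cornerrows la"
  define g where "g = (\<lambda>i. (i, i + la!(i-1)))"
  define s where "s = sorted_list_of_set R"
  define rs where "rs = rev s"
  have Rsub: "R \<subseteq> {1..length la}" unfolding R_def cornerrows_def by auto
  then have fin: "finite R" using finite_subset by blast
  have s_srt: "sorted_wrt (<) s" and set_s: "set s = R"
    using fin unfolding s_def by (simp_all add: strict_sorted_list_of_set)
  have gs: "sorted_wrt (<) (map g s)"
    unfolding sorted_wrt_map g_def
    by (rule sorted_wrt_mono_rel[OF _ s_srt]) auto
  have "outer_corners la = set (map g s)"
    using corners_char[OF sp] set_s unfolding R_def g_def by simp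
  moreover have "sorted_list_of_set (set (map g s)) = map g s"
  proof (rule strict_sorted_equal[OF gs])
    show "sorted_wrt (<) (sorted_list_of_set (set (map g s)))"
      by (rule strict_sorted_list_of_set)
    show "set (sorted_list_of_set (set (map g s))) = set (map g s)" by simp
  qed
  ultimately have "sorted_list_of_set (outer_corners la) = map g s" by simp
  then have cl: "corner_list la = map g rs"
    unfolding corner_list_def rs_def by (simp add: rev_map)
  have srt: "sorted_wrt (>) rs" using s_srt unfolding rs_def by (simp add: sorted_wrt_rev)
  have set_rs: "set rs = cornerrows la" using set_s unfolding rs_def R_def by simp
  define m where "m = length rs"
  have lcl: "length (corner_list la) = m" using cl m_def by simp
  have al: "alpha la j = (if 1 \<le> j \<and> j \<le> m then rs!(j-1) else 0)" for j
    unfolding alpha_def lcl using cl m_def by (auto simp: g_def)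
  have be: "beta la j = rs!(j-1) + la!(rs!(j-1) - 1)" if "1 \<le> j" "j \<le> m" for j
    unfolding beta_def using cl m_def that by (auto simp: g_def)
  define S where "S = (\<lambda>n. \<Sum>i\<in>{1..n}. int (la!(i-1)))"
  define a where "a = alpha la"
  have key: "binom2 (xc la j) - binom2 (yc la j) = S (a j) - S (a (Suc j))"
    if j: "j \<in> {1..m}" for j
  proof -
    define p where "p = (if j < length rs then rs!j else 0)"
    define q where "q = rs!(j-1)"
    have bl: "p < q \<and> (\<forall>i. p < i \<and> i \<le> q \<longrightarrow> i + la!(i-1) = q + la!(q-1))"
    proof -
      have "1 \<le> j" "j \<le> length rs" using j m_def by auto
      from block[OF sp srt set_rs this p_def q_def] show ?thesis .
    qed
    have ap: "a (Suc j) = p" unfolding a_def al p_def m_def by auto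
    have aq: "a j = q" unfolding a_def al q_def using j by auto
    have bq: "beta la j = q + la!(q-1)" using be j q_def by auto
    have "S q - S p = binom2 (int (q + la!(q-1)) - int p) - binom2 (int (q + la!(q-1)) - int q)"
      unfolding S_def
    proof (rule sum_block)
      show "p \<le> q" using bl by simp
      show "\<forall>i. p < i \<and> i \<le> q \<longrightarrow> int (la ! (i - 1)) = int (q + la ! (q - 1)) - int i"
      proof (intro allI impI)
        fix i assume "p < i \<and> i \<le> q"
        then have "i + la!(i-1) = q + la!(q-1)" using bl by blast
        then have "int i + int (la!(i-1)) = int q + int (la!(q-1))"
          using arg_cong[of _ _ int] by fastforce
        then show "int (la ! (i - 1)) = int (q + la ! (q - 1)) - int i" by simp
      qed
    qed
    then show ?thesis unfolding xc_def yc_def using ap aq bq a_def by simp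
  qed
  have a1: "a 1 = length la"
  proof (cases "m = 0")
    case True
    then have "R = {}" using set_rs R_def m_def by auto
    have "length la = 0"
    proof (rule ccontr)
      assume "length la \<noteq> 0"
      then have "length la \<in> R" unfolding R_def cornerrows_def by (auto simp: Suc_le_eq)
      with \<open>R = {}\<close> show False by simp
    qed
    then show ?thesis unfolding a_def al using True by simp
  next
    case False
    have "rs!0 \<in> R" using False m_def set_rs R_def by auto
    then have le: "rs!0 \<le> length la" using Rsub by auto
    then have "length la \<ge> 1" using \<open>rs!0 \<in> R\<close> Rsub by auto
    then have "length la \<in> R" unfolding R_def cornerrows_def by (auto simp: Suc_le_eq)
    then obtain k where k: "k < m" "rs!k = length la"
      using set_rs R_def m_def by (metis in_set_conv_nth)
    have "k = 0"
    proof (rule ccontr)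
      assume "k \<noteq> 0"
      then have "rs!k < rs!0" using srt k m_def unfolding sorted_wrt_iff_nth_less by (metis neq0_conv)
      then show False using k le by simp
    qed
    then show ?thesis unfolding a_def al using k False by simp
  qed
  have x0: "binom2 (xc la 0) = 0"
    unfolding xc_def using a1 a_def by (simp add: beta_def binom2_def)
  have am: "a (Suc m) = 0" unfolding a_def al by simp
  have "q1 la = (\<Sum>i\<in>{0..m}. binom2 (xc la i)) - (\<Sum>j\<in>{1..m}. binom2 (yc la j))"
    unfolding q1_def lcl by simp
  also have "\<dots> = (\<Sum>j\<in>{1..m}. binom2 (xc la j) - binom2 (yc la j))"
    by (simp add: sum.atLeast_Suc_atMost x0 sum_subtractf)
  also have "\<dots> = (\<Sum>j\<in>{1..m}. (- S (a (Suc j))) - (- S (a j)))"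
    using key by (intro sum.cong) auto
  also have "\<dots> = S (a 1) - S (a (Suc m))"
    by (subst sum_Suc_diff[where f = "\<lambda>j. - S (a j)"]) auto
  also have "\<dots> = S (length la)" using a1 am S_def by simp
  also have "\<dots> = int (sum_list la)"
  proof -
    have "S (length la) = (\<Sum>i\<in>{0..<length la}. int (la!i))"
      unfolding S_def
      by (rule sum.reindex_bij_witness[where i = "\<lambda>i. i + 1" and j = "\<lambda>i. i - 1"]) auto
    also have "\<dots> = int (sum_list la)" by (simp add: sum_list_sum_nth)
    finally show ?thesis .
  qed
  finally show ?thesis unfolding size_part_def .
qed

end
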